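(* In the lookdown representation, for each $n$, the map $i\mapsto\tau((n,i))$ is non-increasing on $\{1,\dots,X_n\}$, where $\tau(v)=\inf\{m:D_m(v)=\emptyset\}$.
   Context: Data: $\tau\in\mathbb{N}\cup\{\infty\}$, positive integers $(X_n)_{n<\tau}$, vectors $k_n=(k_n(i))_{i=1}^{X_n}$ of nonnegative integers with $\sum_ik_n(i)=X_{n+1}$. $V_n=\{(n,i):1\le i\le X_n\}$. Lookdown representation: for each $n$ fix a partition $\xi_n$ of $\{1,\dots,X_{n+1}\}$ whose block sizes are the nonzero entries of $k_n$; let $(\sigma_n)$ be independent uniform random permutations of $\{1,\dots,X_{n+1}\}$; list the blocks of $\{\sigma_n(A):A\in\xi_n\}$ in increasing order of least element as $B_1,\dots,B_{\ell_n}$; edges are $((n,i),(n+1,j))$, $j\in B_i$. For $v\in V_n$, $m\ge n$, $D_m(v)$ denotes the descendants of $v$ in generation $m$ (empty if $m\ge\tau$); $\inf\emptyset=\infty$. *)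

theory Defs
  imports Main "HOL-Library.Extended_Nat" "HOL-Library.Multiset"
    "HOL-Library.Disjoint_Sets" "HOL-Combinatorics.Permutations"
begin

text \<open>Generations are indexed by n with enat n < T
  (T plays the role of tau). Vertex (n,i) is encoded by the pair of indices n, i
  with 1 \<le> i \<le> X n. xi n is the fixed partition of {1..X(n+1)}, sigma n the
  permutation of {1..X(n+1)}.\<close>

definition ld_blocks :: "(nat \<Rightarrow> nat set set) \<Rightarrow> (nat \<Rightarrow> nat \<Rightarrow> nat) \<Rightarrow> nat \<Rightarrow> nat set set" where
  "ld_blocks xi sigma n = (\<lambda>A. sigma n ` A) ` xi n"

definition ordered_block :: "nat set set \<Rightarrow> nat \<Rightarrow> nat set" where
  "ordered_block P i = (THE A. A \<in> P \<and> card {C \<in> P. Min C < Min A} + 1 = i)"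

definition ld_edge :: "enat \<Rightarrow> (nat \<Rightarrow> nat) \<Rightarrow> (nat \<Rightarrow> nat set set) \<Rightarrow> (nat \<Rightarrow> nat \<Rightarrow> nat)
    \<Rightarrow> nat \<Rightarrow> nat \<Rightarrow> nat \<Rightarrow> bool" where
  "ld_edge T X xi sigma n i j \<longleftrightarrow>
     enat (Suc n) < T \<and> 1 \<le> i \<and> i \<le> X n \<and> i \<le> card (ld_blocks xi sigma n)
     \<and> j \<in> ordered_block (ld_blocks xi sigma n) i"

text \<open>ld_desc T X xi sigma n i d = D_{n+d}((n,i)) (as a set of indices in generation n+d).\<close>
fun ld_desc :: "enat \<Rightarrow> (nat \<Rightarrow> nat) \<Rightarrow> (nat \<Rightarrow> nat set set) \<Rightarrow> (nat \<Rightarrow> nat \<Rightarrow> nat)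
    \<Rightarrow> nat \<Rightarrow> nat \<Rightarrow> nat \<Rightarrow> nat set" where
  "ld_desc T X xi sigma n i 0 = (if enat n < T \<and> 1 \<le> i \<and> i \<le> X n then {i} else {})"
| "ld_desc T X xi sigma n i (Suc d) =
     {j. \<exists>l \<in> ld_desc T X xi sigma n i d. ld_edge T X xi sigma (n + d) l j}"

definition ld_D :: "enat \<Rightarrow> (nat \<Rightarrow> nat) \<Rightarrow> (nat \<Rightarrow> nat set set) \<Rightarrow> (nat \<Rightarrow> nat \<Rightarrow> nat)
    \<Rightarrow> nat \<Rightarrow> nat \<Rightarrow> nat \<Rightarrow> nat set" where
  "ld_D T X xi sigma n i m = ld_desc T X xi sigma n i (m - n)"

text \<open>Extinction time tau(v) = inf {m : D_m(v) = {}} (inf of empty set = \<infinity>).\<close>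
definition ld_ext :: "enat \<Rightarrow> (nat \<Rightarrow> nat) \<Rightarrow> (nat \<Rightarrow> nat set set) \<Rightarrow> (nat \<Rightarrow> nat \<Rightarrow> nat)
    \<Rightarrow> nat \<Rightarrow> nat \<Rightarrow> enat" where
  "ld_ext T X xi sigma n i = Inf {enat m | m. n \<le> m \<and> ld_D T X xi sigma n i m = {}}"

end

theory Submission
  imports Defs
begin

lemma rank_strict:
  fixes S :: "nat set"
  assumes "finite S" "x \<in> S" "x' \<in> S" "x < x'"
  shows "card {y\<in>S. y < x} < card {y\<in>S. y < x'}"
proof (rule psubset_card_mono)
  show "finite {y\<in>S. y < x'}" using assms by simp
  show "{y\<in>S. y < x} \<subset> {y\<in>S. y < x'}" using assms by auto
qed

lemma rank_bij:
  fixes S :: "nat set"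
  assumes "finite S"
  shows "(\<lambda>x. card {y\<in>S. y < x}) ` S = {0..<card S}"
proof -
  let ?r = "\<lambda>x. card {y\<in>S. y < x}"
  have inj: "inj_on ?r S"
  proof (rule inj_onI)
    fix x x' assume "x \<in> S" "x' \<in> S" "?r x = ?r x'"
    then show "x = x'" using rank_strict[OF assms, of x x'] rank_strict[OF assms, of x' x]
      by (metis less_irrefl nat_neq_iff)
  qed
  have sub: "?r ` S \<subseteq> {0..<card S}"
  proof
    fix z assume "z \<in> ?r ` S"
    then obtain x where x: "x \<in> S" "z = ?r x" by auto
    have "{y\<in>S. y < x} \<subset> S" using x by auto
    then have "?r x < card S" using assms psubset_card_mono by blast
    then show "z \<in> {0..<card S}" using x by simp
  qed
  have "card (?r ` S) = card {0..<card S}" using card_image[OF inj] by simp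
  then show ?thesis using sub by (simp add: card_subset_eq)
qed

lemma ob_mono:
  fixes P :: "nat set set"
  assumes fin: "finite P" and ne: "\<And>A. A \<in> P \<Longrightarrow> finite A \<and> A \<noteq> {}"
    and inj: "inj_on Min P" and l: "1 \<le> l" "l \<le> l'" "l' \<le> card P"
  shows "ordered_block P l \<in> P \<and> ordered_block P l' \<in> P \<and>
         Min (ordered_block P l) \<le> Min (ordered_block P l')"
proof -
  define S where "S = Min ` P"
  have finS: "finite S" using fin S_def by simp
  have cS: "card S = card P" using card_image[OF inj] S_def by simp
  let ?r = "\<lambda>x. card {y\<in>S. y < x}"
  have rk: "card {C \<in> P. Min C < Min A} = ?r (Min A)" for A
  proof -
    have "Min ` {C \<in> P. Min C < Min A} = {y\<in>S. y < Min A}" unfolding S_def by blast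
    moreover have "inj_on Min {C \<in> P. Min C < Min A}" by (rule inj_on_subset[OF inj]) auto
    ultimately show ?thesis by (metis card_image)
  qed
  have ex: "\<exists>x\<in>S. ?r x = q" if "q < card P" for q
  proof -
    have "q \<in> ?r ` S" using rank_bij[OF finS] that cS by simp
    then show ?thesis by blast
  qed
  have obP: "ordered_block P q \<in> P \<and> ?r (Min (ordered_block P q)) + 1 = q"
    if q: "1 \<le> q" "q \<le> card P" for q
  proof -
    obtain x where x: "x \<in> S" "?r x + 1 = q" using ex[of "q - 1"] q by fastforce
    obtain A where A: "A \<in> P" "Min A = x" using x S_def by auto
    have "ordered_block P q = A" unfolding ordered_block_def
    proof (rule the_equality)
      show "A \<in> P \<and> card {C \<in> P. Min C < Min A} + 1 = q" using A x rk[of A] by simp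
    next
      fix B assume B: "B \<in> P \<and> card {C \<in> P. Min C < Min B} + 1 = q"
      then have "?r (Min B) = ?r (Min A)" using rk[of A] rk[of B] A x by simp
      moreover have "Min B \<in> S" "Min A \<in> S" using B A S_def by auto
      ultimately have "Min B = Min A"
      proof -
        assume e: "?r (Min B) = ?r (Min A)" and m: "Min B \<in> S" "Min A \<in> S"
        show ?thesis
        proof (rule ccontr)
          assume "Min B \<noteq> Min A"
          then have "Min B < Min A \<or> Min A < Min B" by arith
          then show False
            using rank_strict[OF finS m(1) m(2)] rank_strict[OF finS m(2) m(1)] e by auto
        qed
      qed
      then show "B = A" using inj B A by (meson inj_onD)
    qed
    then show ?thesis using A x by simp
  qed
  have a: "ordered_block P l \<in> P" "?r (Min (ordered_block P l)) + 1 = l"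
    using obP[of l] l by auto
  have b: "ordered_block P l' \<in> P" "?r (Min (ordered_block P l')) + 1 = l'"
    using obP[of l'] l by auto
  have "Min (ordered_block P l) \<le> Min (ordered_block P l')"
  proof (rule ccontr)
    assume "\<not> ?thesis"
    then have "?r (Min (ordered_block P l')) < ?r (Min (ordered_block P l))"
      using rank_strict[OF finS] a b S_def by simp
    then show False using a b l by simp
  qed
  then show ?thesis using a b by simp
qed

theorem corollary4p2:
  fixes T :: enat and X :: "nat \<Rightarrow> nat" and k :: "nat \<Rightarrow> nat \<Rightarrow> nat"
    and xi :: "nat \<Rightarrow> nat set set" and sigma :: "nat \<Rightarrow> nat \<Rightarrow> nat"
  assumes Xpos: "\<And>n. enat n < T \<Longrightarrow> X n > 0"
    and ksum: "\<And>n. enat (Suc n) < T \<Longrightarrow> (\<Sum>i=1..X n. k n i) = X (Suc n)"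
    and xi_part: "\<And>n. enat (Suc n) < T \<Longrightarrow> partition_on {1..X (Suc n)} (xi n)"
    and xi_sizes: "\<And>n. enat (Suc n) < T \<Longrightarrow>
        image_mset card (mset_set (xi n))
        = filter_mset (\<lambda>c. c \<noteq> 0) (image_mset (k n) (mset_set {1..X n}))"
    and sigma_perm: "\<And>n. enat (Suc n) < T \<Longrightarrow> sigma n permutes {1..X (Suc n)}"
    and n: "enat n < T"
    and ij: "1 \<le> i" "i \<le> j" "j \<le> X n"
  shows "ld_ext T X xi sigma n j \<le> ld_ext T X xi sigma n i"
proof -
  have step: "\<exists>c. ld_edge T X xi sigma m l c \<and> c \<le> c' \<and> 1 \<le> c"
    if e: "ld_edge T X xi sigma m l' c'" and l: "1 \<le> l" "l \<le> l'" for m l l' c'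
  proof -
    let ?P = "ld_blocks xi sigma m"
    have T: "enat (Suc m) < T" using e ld_edge_def by blast
    have part: "partition_on {1..X (Suc m)} (xi m)" using xi_part[OF T] .
    have perm: "sigma m permutes {1..X (Suc m)}" using sigma_perm[OF T] .
    have injs: "inj (sigma m)" using perm permutes_inj by blast
    have finxi: "finite (xi m)" by (rule finite_elements[OF _ part]) simp
    have blk: "A \<subseteq> {1..X (Suc m)} \<and> A \<noteq> {}" if "A \<in> xi m" for A
      using part that unfolding partition_on_def by blast
    have fin: "finite ?P" unfolding ld_blocks_def using finxi by simp
    have ne: "finite A \<and> A \<noteq> {}" if "A \<in> ?P" for A
      using that blk unfolding ld_blocks_def by (auto intro: finite_subset)
    have sub: "A \<subseteq> {1..X (Suc m)}" if hA: "A \<in> ?P" for A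
    proof -
      obtain B where B: "B \<in> xi m" "A = sigma m ` B" using hA unfolding ld_blocks_def by auto
      have "sigma m ` {1..X (Suc m)} = {1..X (Suc m)}" using perm permutes_image by blast
      then show ?thesis using B blk by blast
    qed
    have inj: "inj_on Min ?P"
    proof (rule inj_onI)
      fix A B assume A: "A \<in> ?P" and B: "B \<in> ?P" and eq: "Min A = Min B"
      obtain A0 where A0: "A0 \<in> xi m" "A = sigma m ` A0" using A unfolding ld_blocks_def by auto
      obtain B0 where B0: "B0 \<in> xi m" "B = sigma m ` B0" using B unfolding ld_blocks_def by auto
      have "Min A \<in> A" "Min B \<in> B" using ne A B by auto
      then have "A \<inter> B \<noteq> {}" using eq by auto
      then have "A0 \<inter> B0 \<noteq> {}" using A0 B0 injs by (auto dest: injD)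
      then have "A0 = B0" using part A0 B0 unfolding partition_on_def disjoint_def by blast
      then show "A = B" using A0 B0 by simp
    qed
    have el: "l' \<le> card ?P" "l' \<le> X m" "c' \<in> ordered_block ?P l'"
      using e unfolding ld_edge_def by auto
    from ob_mono[OF fin ne inj l(1) l(2) el(1)]
    have o: "ordered_block ?P l \<in> ?P" "ordered_block ?P l' \<in> ?P"
      "Min (ordered_block ?P l) \<le> Min (ordered_block ?P l')" by auto
    let ?c = "Min (ordered_block ?P l)"
    have c1: "?c \<in> ordered_block ?P l" using ne o(1) by auto
    have "Min (ordered_block ?P l') \<le> c'" using ne o(2) el(3) by auto
    then have le: "?c \<le> c'" using o(3) by simp
    have "1 \<le> ?c" using sub[OF o(1)] c1 by auto
    moreover have "ld_edge T X xi sigma m l ?c"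
      unfolding ld_edge_def using T l el c1 by auto
    ultimately show ?thesis using le by blast
  qed
  have inv: "\<forall>l'\<in>ld_desc T X xi sigma n j d. \<exists>l\<in>ld_desc T X xi sigma n i d. l \<le> l' \<and> 1 \<le> l" for d
  proof (induction d)
    case 0
    then show ?case using n ij by auto
  next
    case (Suc d)
    show ?case
    proof
      fix c' assume "c' \<in> ld_desc T X xi sigma n j (Suc d)"
      then obtain l' where l': "l' \<in> ld_desc T X xi sigma n j d" "ld_edge T X xi sigma (n+d) l' c'"
        by auto
      obtain l where l: "l \<in> ld_desc T X xi sigma n i d" "l \<le> l'" "1 \<le> l" using Suc l' by blast
      obtain c where c: "ld_edge T X xi sigma (n+d) l c" "c \<le> c'" "1 \<le> c"
        using step[OF l'(2) l(3) l(2)] by blast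
      have "c \<in> ld_desc T X xi sigma n i (Suc d)" using c l by auto
      then show "\<exists>l\<in>ld_desc T X xi sigma n i (Suc d). l \<le> c' \<and> 1 \<le> l" using c by blast
    qed
  qed
  have "{enat m | m. n \<le> m \<and> ld_D T X xi sigma n i m = {}}
        \<subseteq> {enat m | m. n \<le> m \<and> ld_D T X xi sigma n j m = {}}"
  proof
    fix z assume "z \<in> {enat m | m. n \<le> m \<and> ld_D T X xi sigma n i m = {}}"
    then obtain m where m: "z = enat m" "n \<le> m" "ld_desc T X xi sigma n i (m - n) = {}"
      unfolding ld_D_def by auto
    then have "ld_desc T X xi sigma n j (m - n) = {}" using inv[of "m - n"] by blast
    then show "z \<in> {enat m | m. n \<le> m \<and> ld_D T X xi sigma n j m = {}}"
      using m unfolding ld_D_def by auto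
  qed
  then show ?thesis unfolding ld_ext_def by (rule Inf_superset_mono)
qed

end
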